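(* Let $B>0$, $\mu>0$, and let $A:[0,\infty)\to[0,\infty)$ be such that \[ f(0)\;=\;\frac{B}{\mu}\int_0^\infty e^{-\mu\tau}A(\tau)\,d\tau \] is finite and $f(0)>1$. For $\theta\in(0,1]$ and $p>0$ let $F(\theta,p)$ denote the unique positive solution $x$ of \[ 1=\frac{B}{1+p-\theta}\int_0^\infty\!\!\int_0^\infty\Big(p\theta e^{-\theta a x}+(1+p)(1-\theta)e^{-(1+p)a x}\Big)e^{-\mu(a+\tau)}A(\tau)\,d\tau\,da, \] which equals \[ F(\theta,p)=\frac{\mu}{2}\left\{\Big(f(0)-\frac{1+p+\theta}{\theta(1+p)}\Big)+\sqrt{\Big(\frac{1+p+\theta}{\theta(1+p)}-f(0)\Big)^2+4\,\frac{f(0)-1}{\theta(1+p)}}\right\}. \] Then \[ \lim_{p\to\infty}F(\theta,p)=\begin{cases}0 & \text{if } \theta\le \frac{1}{f(0)},\\[2pt] \mu\big(f(0)-\frac{1}{\theta}\big) & \text{if } \frac{1}{f(0)}<\theta\le 1.\end{cases} \]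
   Context: Age-structured epidemic model with vaccination and constant per-capita mortality rate $\mu$ (survival function $e^{-\mu a}$): $B$ is the constant birth rate, $A(\tau)$ the expected contribution to the force of infection of an individual infected $\tau$ time units ago, $\theta$ the vaccine parameter (vaccinated susceptibles are infected at $\theta$ times the force of infection), and the vaccination rate equals $p$ times the force of infection. $F(\theta,p)$ is the endemic force of infection and $f(0)$ the basic reproduction number. *)

theory Defs
  imports "HOL-Analysis.Analysis"
begin

definition f0 :: "real \<Rightarrow> real \<Rightarrow> (real \<Rightarrow> real) \<Rightarrow> real" where
  "f0 B \<mu> A = B / \<mu> * (LINT \<tau>:{0..}|lborel. exp (- \<mu> * \<tau>) * A \<tau>)"

definition endemic_rhs :: "real \<Rightarrow> real \<Rightarrow> (real \<Rightarrow> real) \<Rightarrow> real \<Rightarrow> real \<Rightarrow> real \<Rightarrow> real" where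
  "endemic_rhs B \<mu> A \<theta> p x =
     B / (1 + p - \<theta>) *
     (LINT a:{0..}|lborel. LINT \<tau>:{0..}|lborel.
        (p * \<theta> * exp (- \<theta> * a * x) + (1 + p) * (1 - \<theta>) * exp (- (1 + p) * a * x))
        * exp (- \<mu> * (a + \<tau>)) * A \<tau>)"

definition F :: "real \<Rightarrow> real \<Rightarrow> (real \<Rightarrow> real) \<Rightarrow> real \<Rightarrow> real \<Rightarrow> real" where
  "F B \<mu> A \<theta> p = (THE x. x > 0 \<and> endemic_rhs B \<mu> A \<theta> p x = 1)"

end

theory Submission imports Defs "HOL-Probability.Sinc_Integral" begin
lemma expint:
  fixes c :: real assumes c: "c > 0"
  shows "set_integrable lborel {0..} (\<lambda>a. exp (- c * a))"
    and "(LINT a:{0..}|lborel. exp (- c * a)) = 1 / c"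
proof -
  have ae: "AE x in lborel. indicator {0<..} x *\<^sub>R exp (- c * x) = indicator {0..} x *\<^sub>R exp (- c * x)"
    using AE_lborel_singleton[of 0] by eventually_elim (auto split: split_indicator)
  have i: "set_integrable lborel {0<..} (\<lambda>a. exp (- c * a))"
    using integrable_I0i_exp_mscale[OF c] by (simp add: mult.commute)
  show "set_integrable lborel {0..} (\<lambda>a. exp (- c * a))"
    unfolding set_integrable_def
    by (rule integrable_cong_AE_imp[OF i[unfolded set_integrable_def] _ ae]) measurable
  have "(LINT a:{0..}|lborel. exp (- c * a)) = (LINT a:{0<..}|lborel. exp (- c * a))"
    unfolding set_lebesgue_integral_def using ae by (intro integral_cong_AE) (auto elim: AE_mp)
  also have "\<dots> = 1 / c"
    using LBINT_I0i_exp_mscale[OF c] by (simp add: interval_lebesgue_integral_0_infty mult.commute)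
  finally show "(LINT a:{0..}|lborel. exp (- c * a)) = 1 / c" .
qed

lemma rhs_eq:
  fixes B \<mu> \<theta> p x :: real and A :: "real \<Rightarrow> real"
  assumes "\<mu> > 0" "\<theta> > 0" "p > 0" "x > 0"
  shows "endemic_rhs B \<mu> A \<theta> p x = B / (1 + p - \<theta>) * (LINT \<tau>:{0..}|lborel. exp (- \<mu> * \<tau>) * A \<tau>)
     * (p * \<theta> / (\<theta> * x + \<mu>) + (1 + p) * (1 - \<theta>) / ((1 + p) * x + \<mu>))"
proof -
  define I where "I = (LINT \<tau>:{0..}|lborel. exp (- \<mu> * \<tau>) * A \<tau>)"
  define c1 where "c1 = \<theta> * x + \<mu>"
  define c2 where "c2 = (1 + p) * x + \<mu>"
  have c1: "c1 > 0" unfolding c1_def using assms by (simp add: add_pos_pos)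
  have c2: "c2 > 0" unfolding c2_def using assms by (simp add: add_pos_pos)
  have inner: "(LINT \<tau>:{0..}|lborel.
        (p * \<theta> * exp (- \<theta> * a * x) + (1 + p) * (1 - \<theta>) * exp (- (1 + p) * a * x))
        * exp (- \<mu> * (a + \<tau>)) * A \<tau>)
      = I * (p * \<theta> * exp (- c1 * a) + (1 + p) * (1 - \<theta>) * exp (- c2 * a))" for a
  proof -
    have e: "exp (- \<mu> * (a + \<tau>)) = exp (- \<mu> * a) * exp (- \<mu> * \<tau>)" for \<tau>
      by (metis distrib_left exp_add)
    have e1: "exp (- \<theta> * a * x) * exp (- \<mu> * a) = exp (- c1 * a)"
      unfolding c1_def by (simp add: exp_add[symmetric] algebra_simps)
    have e2: "exp (- (1 + p) * a * x) * exp (- \<mu> * a) = exp (- c2 * a)"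
      unfolding c2_def by (simp add: exp_add[symmetric] algebra_simps)
    have "(LINT \<tau>:{0..}|lborel.
        (p * \<theta> * exp (- \<theta> * a * x) + (1 + p) * (1 - \<theta>) * exp (- (1 + p) * a * x))
        * exp (- \<mu> * (a + \<tau>)) * A \<tau>)
      = (LINT \<tau>:{0..}|lborel. ((p * \<theta> * exp (- \<theta> * a * x) + (1 + p) * (1 - \<theta>) * exp (- (1 + p) * a * x))
        * exp (- \<mu> * a)) * (exp (- \<mu> * \<tau>) * A \<tau>))"
      unfolding e by (simp add: mult_ac)
    also have "\<dots> = ((p * \<theta> * exp (- \<theta> * a * x) + (1 + p) * (1 - \<theta>) * exp (- (1 + p) * a * x))
        * exp (- \<mu> * a)) * I"
      unfolding I_def by (rule set_integral_mult_right)
    also have "\<dots> = I * (p * \<theta> * exp (- c1 * a) + (1 + p) * (1 - \<theta>) * exp (- c2 * a))"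
      using e1 e2 by (simp add: algebra_simps)
    finally show ?thesis .
  qed
  have "endemic_rhs B \<mu> A \<theta> p x = B / (1 + p - \<theta>) *
     (LINT a:{0..}|lborel. I * (p * \<theta> * exp (- c1 * a) + (1 + p) * (1 - \<theta>) * exp (- c2 * a)))"
    unfolding endemic_rhs_def inner ..
  also have "(LINT a:{0..}|lborel. I * (p * \<theta> * exp (- c1 * a) + (1 + p) * (1 - \<theta>) * exp (- c2 * a)))
     = I * ((p * \<theta>) * (LINT a:{0..}|lborel. exp (- c1 * a)) + ((1 + p) * (1 - \<theta>)) * (LINT a:{0..}|lborel. exp (- c2 * a)))"
    using expint(1)[OF c1] expint(1)[OF c2]
    by (simp add: set_integral_add)
  also have "\<dots> = I * (p * \<theta> / c1 + (1 + p) * (1 - \<theta>) / c2)"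
    using expint(2)[OF c1] expint(2)[OF c2] by simp
  finally show ?thesis unfolding I_def c1_def c2_def by simp
qed

lemma quad_unique:
  fixes t b g x y :: real
  assumes "t > 0" "g < 0" "x > 0" "y > 0" "t * x^2 + b * x + g = 0" "t * y^2 + b * y + g = 0"
  shows "x = y"
proof (rule ccontr)
  assume ne: "x \<noteq> y"
  have "(x - y) * (t * (x + y) + b) = 0" using assms(5,6) by (simp add: algebra_simps power2_eq_square)
  hence "b = - t * (x + y)" using ne by simp
  hence "g = t * x * y" using assms(5) by (simp add: power2_eq_square) (simp add: algebra_simps)
  moreover have "t * x * y > 0" using assms by simp
  ultimately show False using assms(2) by simp
qed

lemma quad_root:
  fixes t b g :: real
  assumes "t > 0" "g < 0"
  defines "r \<equiv> (- b + sqrt (b^2 - 4 * t * g)) / (2 * t)"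
  shows "r > 0" "t * r^2 + b * r + g = 0"
proof -
  have D: "b^2 - 4 * t * g > b^2" using assms by (simp add: mult_pos_neg)
  have "sqrt (b^2) < sqrt (b^2 - 4 * t * g)" using D by (subst real_sqrt_less_iff) simp
  hence "b < sqrt (b^2 - 4 * t * g)" by simp
  hence "0 < - b + sqrt (b^2 - 4 * t * g)" by linarith
  thus "r > 0" unfolding r_def using assms(1) by (intro divide_pos_pos) auto
  define q where "q = sqrt (b^2 - 4 * t * g)"
  have D0: "0 \<le> b^2 - 4 * t * g" using D zero_le_power2[of b] by linarith
  have s: "q^2 = b^2 - 4 * t * g" unfolding q_def using D0 by (rule real_sqrt_pow2)
  have r2: "2 * t * r = q - b" unfolding r_def q_def using assms(1) by simp
  have "4 * t * (t * r^2 + b * r + g) = (2 * t * r)^2 + 2 * b * (2 * t * r) + 4 * t * g"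
    by (simp add: algebra_simps power2_eq_square)
  also have "\<dots> = q^2 - b^2 + 4 * t * g" unfolding r2 by (simp add: algebra_simps power2_eq_square)
  also have "\<dots> = 0" using s by simp
  finally show "t * r^2 + b * r + g = 0" using assms(1) by simp
qed

lemma X: fixes q \<theta> x \<mu> f :: real assumes "q > 0" shows
 "q * (\<theta> * x^2 + (\<mu> * (\<theta> * (1 / q) + 1 - f * \<theta>)) * x + \<mu>^2 * (1 - f) * (1 / q))
       = (\<theta> * x + \<mu>) * (q * x + \<mu>) - f * \<mu> * (q * \<theta> * x + \<mu>)"
proof -
  have a: "q * (\<theta> * (1 / q)) = \<theta>" "q * (1 / q) = 1" using assms by simp_all
  have "q * (\<theta> * x^2 + (\<mu> * (\<theta> * (1 / q) + 1 - f * \<theta>)) * x + \<mu>^2 * (1 - f) * (1 / q))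
     = q * \<theta> * x^2 + \<mu> * (q * (\<theta> * (1 / q))) * x + q * \<mu> * x - q * f * \<theta> * \<mu> * x + \<mu>^2 * (1 - f) * (q * (1 / q))"
    by (simp add: algebra_simps)
  also have "\<dots> = (\<theta> * x + \<mu>) * (q * x + \<mu>) - f * \<mu> * (q * \<theta> * x + \<mu>)"
    unfolding a by (simp add: algebra_simps power2_eq_square)
  finally show ?thesis .
qed

lemma key:
  fixes \<mu> \<theta> p x f :: real
  assumes "\<mu> > 0" "\<theta> > 0" "\<theta> \<le> 1" "p > 0" "x > 0"
  shows "(f * \<mu> / (1 + p - \<theta>) * (p * \<theta> / (\<theta> * x + \<mu>) + (1 + p) * (1 - \<theta>) / ((1 + p) * x + \<mu>)) = 1)
    \<longleftrightarrow> \<theta> * x^2 + (\<mu> * (\<theta> * (1 / (1 + p)) + 1 - f * \<theta>)) * x + \<mu>^2 * (1 - f) * (1 / (1 + p)) = 0"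
proof -
  define q where "q = 1 + p"
  have q: "q > 0" "q - \<theta> > 0" using assms unfolding q_def by auto
  have d1: "\<theta> * x + \<mu> > 0" using assms by (simp add: add_pos_pos)
  have d2: "q * x + \<mu> > 0" using assms q by (simp add: add_pos_pos)
  have pq: "p = q - 1" unfolding q_def by simp
  have sum: "p * \<theta> / (\<theta> * x + \<mu>) + q * (1 - \<theta>) / (q * x + \<mu>)
      = (q - \<theta>) * (q * \<theta> * x + \<mu>) / ((\<theta> * x + \<mu>) * (q * x + \<mu>))"
    using d1 d2 unfolding pq by (simp add: field_simps)
  have "(f * \<mu> / (q - \<theta>) * (p * \<theta> / (\<theta> * x + \<mu>) + q * (1 - \<theta>) / (q * x + \<mu>)) = 1)
     \<longleftrightarrow> f * \<mu> * (q * \<theta> * x + \<mu>) / ((\<theta> * x + \<mu>) * (q * x + \<mu>)) = 1"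
    unfolding sum using q by (simp add: mult_ac)
  also have "\<dots> \<longleftrightarrow> f * \<mu> * (q * \<theta> * x + \<mu>) = (\<theta> * x + \<mu>) * (q * x + \<mu>)"
    using d1 d2 by (auto simp add: divide_eq_1_iff)
  also have "\<dots> \<longleftrightarrow> q * (\<theta> * x^2 + (\<mu> * (\<theta> * (1 / q) + 1 - f * \<theta>)) * x + \<mu>^2 * (1 - f) * (1 / q)) = 0"
  proof -
    have "q * (\<theta> * x^2 + (\<mu> * (\<theta> * (1 / q) + 1 - f * \<theta>)) * x + \<mu>^2 * (1 - f) * (1 / q))
       = (\<theta> * x + \<mu>) * (q * x + \<mu>) - f * \<mu> * (q * \<theta> * x + \<mu>)"
      using q(1) by (rule X)
    thus ?thesis by linarith
  qed
  also have "\<dots> \<longleftrightarrow> \<theta> * x^2 + (\<mu> * (\<theta> * (1 / q) + 1 - f * \<theta>)) * x + \<mu>^2 * (1 - f) * (1 / q) = 0"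
    using q by simp
  finally show ?thesis unfolding q_def .
qed

theorem mainTheorem3:
  fixes B \<mu> \<theta> :: real and A :: "real \<Rightarrow> real"
  assumes "B > 0" and "\<mu> > 0"
    and "\<And>\<tau>. \<tau> \<ge> 0 \<Longrightarrow> A \<tau> \<ge> 0"
    and "set_integrable lborel {0..} (\<lambda>\<tau>. exp (- \<mu> * \<tau>) * A \<tau>)"
    and "f0 B \<mu> A > 1"
    and "0 < \<theta>" and "\<theta> \<le> 1"
  shows "((\<lambda>p. F B \<mu> A \<theta> p) \<longlongrightarrow>
           (if \<theta> \<le> 1 / f0 B \<mu> A then 0 else \<mu> * (f0 B \<mu> A - 1 / \<theta>))) at_top"
proof -
  define f where "f = f0 B \<mu> A"
  define I where "I = (LINT \<tau>:{0..}|lborel. exp (- \<mu> * \<tau>) * A \<tau>)"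
  have f1: "f > 1" using assms unfolding f_def by simp
  have BI: "B * I = f * \<mu>" unfolding f_def f0_def I_def using assms(2) by simp
  define g where "g u = (- (\<mu> * (\<theta> * u + 1 - f * \<theta>)) + sqrt ((\<mu> * (\<theta> * u + 1 - f * \<theta>))^2
      - 4 * \<theta> * (\<mu>^2 * (1 - f) * u))) / (2 * \<theta>)" for u
  have ev: "\<forall>\<^sub>F p in at_top. g (1 / (1 + p)) = F B \<mu> A \<theta> p"
    using eventually_gt_at_top[of "0::real"]
  proof eventually_elim
    case (elim p)
    define u where "u = 1 / (1 + p)"
    have u: "u > 0" unfolding u_def using elim by simp
    have gam: "\<mu>^2 * (1 - f) * u < 0" using u f1 assms(2) by (simp add: mult_pos_neg mult_neg_pos)
    have P: "x > 0 \<and> endemic_rhs B \<mu> A \<theta> p x = 1 \<longleftrightarrow>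
        x > 0 \<and> \<theta> * x^2 + (\<mu> * (\<theta> * u + 1 - f * \<theta>)) * x + \<mu>^2 * (1 - f) * u = 0" for x
    proof (cases "x > 0")
      case True
      have "endemic_rhs B \<mu> A \<theta> p x = f * \<mu> / (1 + p - \<theta>) *
         (p * \<theta> / (\<theta> * x + \<mu>) + (1 + p) * (1 - \<theta>) / ((1 + p) * x + \<mu>))"
        using rhs_eq[OF assms(2) assms(6) elim True, of B A] BI unfolding I_def by simp
      then show ?thesis using key[OF assms(2) assms(6) assms(7) elim True, of f] True
        unfolding u_def by simp
    qed simp
    have r: "g u > 0" "\<theta> * (g u)^2 + (\<mu> * (\<theta> * u + 1 - f * \<theta>)) * g u + \<mu>^2 * (1 - f) * u = 0"
      using quad_root[OF assms(6) gam, of "\<mu> * (\<theta> * u + 1 - f * \<theta>)"] unfolding g_def by simp_all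
    have "F B \<mu> A \<theta> p = g u"
      unfolding F_def
    proof (rule the_equality)
      show "0 < g u \<and> endemic_rhs B \<mu> A \<theta> p (g u) = 1" using P r by blast
      fix x assume "0 < x \<and> endemic_rhs B \<mu> A \<theta> p x = 1"
      hence "x > 0" "\<theta> * x^2 + (\<mu> * (\<theta> * u + 1 - f * \<theta>)) * x + \<mu>^2 * (1 - f) * u = 0"
        using P by blast+
      thus "x = g u" using quad_unique[OF assms(6) gam _ r(1) _ r(2)] by blast
    qed
    thus ?case unfolding u_def by simp
  qed
  have "filterlim (\<lambda>p::real. 1 + p) at_top at_top"
    by (rule filterlim_tendsto_add_at_top[OF tendsto_const filterlim_ident])
  hence u0: "((\<lambda>p::real. 1 / (1 + p)) \<longlongrightarrow> 0) at_top"
    using tendsto_inverse_0_at_top by (simp add: inverse_eq_divide)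
  have lim: "((\<lambda>p. g (1 / (1 + p))) \<longlongrightarrow> g 0) at_top"
    unfolding g_def using assms(6) by (intro tendsto_intros u0) auto
  have g0: "g 0 = (if \<theta> \<le> 1 / f then 0 else \<mu> * (f - 1 / \<theta>))"
  proof -
    have G0: "g 0 = (- (\<mu> * (1 - f * \<theta>)) + \<bar>\<mu> * (1 - f * \<theta>)\<bar>) / (2 * \<theta>)"
      unfolding g_def by simp
    moreover have TH: "\<theta> \<le> 1 / f \<longleftrightarrow> f * \<theta> \<le> 1" using f1 by (simp add: field_simps)
    ultimately show ?thesis
    proof (cases "f * \<theta> \<le> 1")
      case True
      hence "\<mu> * (1 - f * \<theta>) \<ge> 0" using assms(2) by simp
      thus ?thesis using G0 TH True by simp
    next
      case False
      hence "\<mu> * (1 - f * \<theta>) < 0" using assms(2) by (simp add: mult_pos_neg)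
      hence "g 0 = \<mu> * (f * \<theta> - 1) / \<theta>" using G0 assms(6) by (simp add: field_simps)
      also have "\<dots> = \<mu> * (f - 1 / \<theta>)" using assms(6) by (simp add: field_simps)
      finally show ?thesis using TH False by simp
    qed
  qed
  show ?thesis unfolding f_def[symmetric] g0[symmetric]
    using lim ev by (rule Lim_transform_eventually)
qed
end
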